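(* Let $T\in\mathsf{SYT}(\lambda)$, let $\alpha=\mathsf{Des}(T)=(\alpha_1,\dots,\alpha_\ell)$, and let $I=[i,i+2m]$ be a Dyck pattern interval of $T$; write $I^-=[i,i+m-1]$ and $I^+=[i+m+1,i+2m]$. Then there is $1\le j<\ell$ with $I^-\cup\{i+m\}\subseteq\alpha^{(j)}$ and $I^+\subseteq\alpha^{(j+1)}$.
   Context: French notation; $|\lambda|=N$; $\mathsf{SYT}(\lambda)$ standard tableaux. The reading word $\mathsf{row}(T)$ reads rows left to right from the top row to the bottom row. For a permutation $\pi$ of $[N]$ and $I=[i,i+2m]\subseteq[N]$, $m\ge1$, $I$ is a Dyck pattern interval of $\pi$ if the RSK insertion tableau of the subword $\pi|_I$ of letters in $I$ has bottom row $i,\dots,i+m$ and top row $i+m+1,\dots,i+2m$; a Dyck pattern interval of $T$ is one of $\mathsf{row}(T)$. A letter $d$ is a descent of $T$ if $d+1$ lies in a strictly higher row than $d$; if the descents are $d_1<\dots<d_k$, then $\mathsf{Des}(T)=(d_1,d_2-d_1,\dots,d_k-d_{k-1},N-d_k)$. For a composition $\alpha=(\alpha_1,\dots,\alpha_\ell)$ of $N$, $\alpha^{(j)}=\{\alpha_1+\dots+\alpha_{j-1}+1,\dots,\alpha_1+\dots+\alpha_j\}$. *)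

theory Defs
  imports Main
begin

text \<open>Conventions (French notation). A tableau is a list of rows; row 0 is the
  bottom row, row k+1 lies directly above row k. Entries are natural numbers.\<close>

definition is_partition :: "nat list \<Rightarrow> bool" where
  "is_partition lam \<longleftrightarrow> sorted_wrt (\<ge>) lam \<and> 0 \<notin> set lam"

definition SYT :: "nat list \<Rightarrow> nat list list set" where
  "SYT lam = {T. is_partition lam \<and> map length T = lam
      \<and> distinct (concat T) \<and> set (concat T) = {1..sum_list lam}
      \<and> (\<forall>r < length T. sorted_wrt (<) (T ! r))
      \<and> (\<forall>r c. r + 1 < length T \<and> c < length (T ! (r + 1))
               \<longrightarrow> T ! r ! c < T ! (r + 1) ! c)}"

definition row_word :: "nat list list \<Rightarrow> nat list" where
  "row_word T = concat (rev T)"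

fun row_insert :: "nat list list \<Rightarrow> nat \<Rightarrow> nat list list" where
  "row_insert [] x = [[x]]"
| "row_insert (r # rs) x =
     (let p = takeWhile (\<lambda>z. z < x) r; s = dropWhile (\<lambda>z. z < x) r in
      if s = [] then (r @ [x]) # rs
      else (p @ x # tl s) # row_insert rs (hd s))"

definition insertion_tableau :: "nat list \<Rightarrow> nat list list" where
  "insertion_tableau w = foldl row_insert [] w"

definition dyck_pattern_interval :: "nat list \<Rightarrow> nat \<Rightarrow> nat \<Rightarrow> bool" where
  "dyck_pattern_interval pi i m \<longleftrightarrow>
     1 \<le> m \<and> 1 \<le> i \<and> i + 2 * m \<le> length pi \<and>
     insertion_tableau (filter (\<lambda>a. a \<in> {i..i + 2 * m}) pi)
       = [[i..<i + m + 1], [i + m + 1..<i + 2 * m + 1]]"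

definition tab_size :: "nat list list \<Rightarrow> nat" where
  "tab_size T = length (concat T)"

definition row_of :: "nat list list \<Rightarrow> nat \<Rightarrow> nat" where
  "row_of T a = (THE r. r < length T \<and> a \<in> set (T ! r))"

definition descents :: "nat list list \<Rightarrow> nat set" where
  "descents T = {d. 1 \<le> d \<and> d + 1 \<le> tab_size T \<and> row_of T d < row_of T (d + 1)}"

definition Des :: "nat list list \<Rightarrow> nat list" where
  "Des T = (let ds = sorted_list_of_set (descents T);
                bs = 0 # ds @ [tab_size T]
            in map (\<lambda>k. bs ! (k + 1) - bs ! k) [0..<length ds + 1])"

definition comp_block :: "nat list \<Rightarrow> nat \<Rightarrow> nat set" where
  "comp_block alpha j = {sum_list (take (j - 1) alpha) + 1 .. sum_list (take j alpha)}"

end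

theory Submission
  imports Defs
begin


fun before :: "nat \<Rightarrow> nat \<Rightarrow> nat list \<Rightarrow> bool" where
  "before a b [] = False"
| "before a b (c # w) = ((c = a \<and> b \<in> set w) \<or> before a b w)"

lemma before_set: "before a b w \<Longrightarrow> a \<in> set w \<and> b \<in> set w"
  by (induction w) auto

lemma before_snoc: "before a b (v @ [x]) \<longleftrightarrow> before a b v \<or> (x = b \<and> a \<in> set v)"
  by (induction v) auto

lemma before_filter: "P a \<Longrightarrow> P b \<Longrightarrow> before a b (filter P w) \<longleftrightarrow> before a b w"
  by (induction w) auto

lemma before_total: "a \<in> set w \<Longrightarrow> b \<in> set w \<Longrightarrow> a \<noteq> b \<Longrightarrow> before a b w \<or> before b a w"
  by (induction w) auto

lemma before_antisym: "distinct w \<Longrightarrow> before a b w \<Longrightarrow> \<not> before b a w"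
  by (induction w) (auto dest: before_set)

lemma before_app1: "before a b u \<Longrightarrow> before a b (u @ v)"
  by (induction u) auto
lemma before_app2: "before a b v \<Longrightarrow> before a b (u @ v)"
  by (induction u) auto
lemma before_app3: "a \<in> set u \<Longrightarrow> b \<in> set v \<Longrightarrow> before a b (u @ v)"
  by (induction u) auto

lemma before_sorted: "sorted_wrt (<) r \<Longrightarrow> a \<in> set r \<Longrightarrow> b \<in> set r \<Longrightarrow> a < b \<Longrightarrow> before a b r"
  by (induction r) auto

lemma concat_split: "p < length L \<Longrightarrow> concat L = concat (take p L) @ L ! p @ concat (drop (Suc p) L)"
  by (metis Cons_nth_drop_Suc append_take_drop_id concat.simps(2) concat_append)

lemma before_concat_same: "p < length L \<Longrightarrow> before a b (L ! p) \<Longrightarrow> before a b (concat L)"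
  by (metis before_app1 before_app2 concat_split)

lemma before_concat_diff: "p < q \<Longrightarrow> q < length L \<Longrightarrow> a \<in> set (L ! p) \<Longrightarrow> b \<in> set (L ! q) \<Longrightarrow> before a b (concat L)"
proof -
  assume h: "p < q" "q < length L" "a \<in> set (L ! p)" "b \<in> set (L ! q)"
  have "concat L = concat (take q L) @ concat (drop q L)"
    by (metis append_take_drop_id concat_append)
  moreover have "L ! p \<in> set (take q L)" using h
    by (auto simp: in_set_conv_nth intro!: exI[of _ p])
  hence "a \<in> set (concat (take q L))" using h by auto
  moreover have "L ! q \<in> set (drop q L)" using h
    by (auto simp: in_set_conv_nth intro!: exI[of _ 0])
  hence "b \<in> set (concat (drop q L))" using h by auto
  ultimately show ?thesis by (metis before_app3)
qed



definition in_row :: "nat list list \<Rightarrow> nat \<Rightarrow> nat \<Rightarrow> bool" where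
  "in_row P k e \<longleftrightarrow> k < length P \<and> e \<in> set (P ! k)"

definition rows_sorted :: "nat list list \<Rightarrow> bool" where
  "rows_sorted P \<longleftrightarrow> (\<forall>r\<in>set P. sorted_wrt (<) r)"

lemma in_row_Cons0[simp]: "in_row (r # rs) 0 e \<longleftrightarrow> e \<in> set r"
  by (simp add: in_row_def)
lemma in_row_ConsS[simp]: "in_row (r # rs) (Suc k) e \<longleftrightarrow> in_row rs k e"
  by (simp add: in_row_def)
lemma in_row_Nil[simp]: "\<not> in_row [] k e"
  by (simp add: in_row_def)

lemma in_row_ex: "e \<in> set (concat P) \<Longrightarrow> \<exists>k. in_row P k e"
proof -
  assume "e \<in> set (concat P)"
  then obtain row where "row \<in> set P" "e \<in> set row" by auto
  then obtain k where "k < length P" "P ! k = row" by (metis in_set_conv_nth)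
  thus ?thesis using \<open>e \<in> set row\<close> by (auto simp: in_row_def)
qed

lemma ri_ne: "dropWhile (\<lambda>z. z < x) r \<noteq> [] \<Longrightarrow>
  row_insert (r # rs) x = (takeWhile (\<lambda>z. z < x) r @ x # tl (dropWhile (\<lambda>z. z < x) r)) # row_insert rs (hd (dropWhile (\<lambda>z. z < x) r))"
  by (simp only: row_insert.simps Let_def if_not_P if_False)

lemma ri_e: "dropWhile (\<lambda>z. z < x) r = [] \<Longrightarrow>
  row_insert (r # rs) x = (r @ [x]) # rs"
  by (simp only: row_insert.simps Let_def if_P)

lemma ri_dec:
  assumes "\<not> (\<forall>z\<in>set r. z < x)"
  obtains p y t where "r = p @ y # t" "\<forall>a\<in>set p. a < x" "\<not> y < x"
    "row_insert (r # rs) x = (p @ x # t) # row_insert rs y"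
proof -
  have ne: "dropWhile (\<lambda>z. z < x) r \<noteq> []" using assms by (simp add: dropWhile_eq_Nil_conv)
  show ?thesis
  proof (rule that[of "takeWhile (\<lambda>z. z < x) r" "hd (dropWhile (\<lambda>z. z < x) r)" "tl (dropWhile (\<lambda>z. z < x) r)"])
    show "r = takeWhile (\<lambda>z. z < x) r @ hd (dropWhile (\<lambda>z. z < x) r) # tl (dropWhile (\<lambda>z. z < x) r)"
      using ne by simp
    show "\<forall>a\<in>set (takeWhile (\<lambda>z. z < x) r). a < x" by (meson set_takeWhileD)
    show "\<not> hd (dropWhile (\<lambda>z. z < x) r) < x" using ne hd_dropWhile by blast
    show "row_insert (r # rs) x = (takeWhile (\<lambda>z. z < x) r @ x # tl (dropWhile (\<lambda>z. z < x) r)) # row_insert rs (hd (dropWhile (\<lambda>z. z < x) r))"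
      using ne by (rule ri_ne)
  qed
qed

lemma ri_dec_e: "\<forall>z\<in>set r. z < x \<Longrightarrow> row_insert (r # rs) x = (r @ [x]) # rs"
  by (rule ri_e) (simp add: dropWhile_eq_Nil_conv)

lemma R0: "in_row (row_insert P x) 0 x"
  by (cases P) (auto simp: Let_def)

lemma R_sorted: "rows_sorted P \<Longrightarrow> rows_sorted (row_insert P x)"
proof (induction P arbitrary: x)
  case Nil
  then show ?case by (simp add: rows_sorted_def)
next
  case (Cons r rs)
  have sr: "sorted_wrt (<) r" and srs: "rows_sorted rs" using Cons.prems by (auto simp: rows_sorted_def)
  show ?case
  proof (cases "\<forall>z\<in>set r. z < x")
    case True
    then show ?thesis using sr srs ri_dec_e[OF True] by (auto simp: rows_sorted_def sorted_wrt_append)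
  next
    case False
    then obtain p y t where d: "r = p @ y # t" "\<forall>a\<in>set p. a < x" "\<not> y < x"
      "row_insert (r # rs) x = (p @ x # t) # row_insert rs y" by (rule ri_dec)
    have "sorted_wrt (<) (p @ y # t)" using sr d(1) by simp
    hence "sorted_wrt (<) (p @ x # t)" using d(2,3) by (auto simp: sorted_wrt_append)
    then show ?thesis using d(4) Cons.IH[OF srs, of y] by (auto simp: rows_sorted_def)
  qed
qed

lemma R_set: "set (concat (row_insert P x)) = insert x (set (concat P))
   \<and> (distinct (concat P) \<and> x \<notin> set (concat P) \<longrightarrow> distinct (concat (row_insert P x)))"
proof (induction P arbitrary: x)
  case Nil
  then show ?case by simp
next
  case (Cons r rs)
  show ?case
  proof (cases "\<forall>z\<in>set r. z < x")
    case True
    then show ?thesis using ri_dec_e[OF True] by auto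
  next
    case False
    then obtain p y t where d: "r = p @ y # t" "\<forall>a\<in>set p. a < x" "\<not> y < x"
      "row_insert (r # rs) x = (p @ x # t) # row_insert rs y" by (rule ri_dec)
    have IH: "set (concat (row_insert rs y)) = insert y (set (concat rs))"
      "distinct (concat rs) \<and> y \<notin> set (concat rs) \<longrightarrow> distinct (concat (row_insert rs y))"
      using Cons.IH by blast+
    show ?thesis
      using IH d by auto
  qed
qed



lemma in_row_app: "in_row (r # rs) k e \<Longrightarrow> in_row ((r @ [x]) # rs) k e"
  by (cases k) auto

lemma R_mono: "distinct (concat P) \<Longrightarrow> x \<notin> set (concat P) \<Longrightarrow> in_row P k e
  \<Longrightarrow> \<exists>k'\<ge>k. in_row (row_insert P x) k' e"
proof (induction P arbitrary: x k)
  case Nil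
  then show ?case by simp
next
  case (Cons r rs)
  show ?case
  proof (cases "\<forall>z\<in>set r. z < x")
    case True
    then show ?thesis using ri_dec_e[OF True] Cons.prems
      by (cases k) (auto intro!: exI[of _ k])
  next
    case False
    then obtain p y t where d: "r = p @ y # t" "\<forall>a\<in>set p. a < x" "\<not> y < x"
      "row_insert (r # rs) x = (p @ x # t) # row_insert rs y" by (rule ri_dec)
    have yn: "y \<notin> set (concat rs)" using Cons.prems(1) d(1) by auto
    have dr: "distinct (concat rs)" using Cons.prems(1) by simp
    show ?thesis
    proof (cases k)
      case 0
      hence "e \<in> set r" using Cons.prems(3) by simp
      show ?thesis
      proof (cases "e = y")
        case True
        hence "in_row (row_insert (r # rs) x) 1 e" using d(4) R0[of rs y] by simp
        then show ?thesis using 0 by (intro exI[of _ 1]) simp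
      next
        case False
        hence "in_row (row_insert (r # rs) x) 0 e" using d \<open>e \<in> set r\<close> by simp
        then show ?thesis using 0 by blast
      qed
    next
      case (Suc k0)
      hence "in_row rs k0 e" using Cons.prems(3) by simp
      then obtain k' where "k' \<ge> k0" "in_row (row_insert rs y) k' e"
        using Cons.IH[OF dr yn] by blast
      then show ?thesis using d(4) Suc by (intro exI[of _ "Suc k'"]) simp
    qed
  qed
qed

lemma R_ins_d: assumes "rows_sorted Q" "distinct (concat Q)" "d \<notin> set (concat Q)" "in_row Q c (Suc d)"
  shows "\<exists>a b. a < b \<and> in_row (row_insert Q d) a d \<and> in_row (row_insert Q d) b (Suc d)"
proof (cases c)
  case (Suc c0)
  obtain k' where "k' \<ge> c" "in_row (row_insert Q d) k' (Suc d)"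
    using R_mono[OF assms(2,3,4)] by blast
  thus ?thesis using R0[of Q d] Suc by (intro exI[of _ 0] exI[of _ k']) auto
next
  case 0
  then obtain r rs where Q: "Q = r # rs" using assms(4) by (cases Q) auto
  have "Suc d \<in> set r" using assms(4) 0 Q by simp
  hence F: "\<not> (\<forall>z\<in>set r. z < d)" by (metis lessI less_asym)
  then obtain p y t where dd: "r = p @ y # t" "\<forall>a\<in>set p. a < d" "\<not> y < d"
      "row_insert (r # rs) d = (p @ d # t) # row_insert rs y" by (rule ri_dec)
  have sr: "sorted_wrt (<) (p @ y # t)" using assms(1) Q dd(1) by (simp add: rows_sorted_def)
  have "y \<noteq> d" using assms(3) Q dd(1) by auto
  moreover have "y \<le> Suc d"
  proof -
    have "Suc d \<in> set (y # t)" using \<open>Suc d \<in> set r\<close> dd(1,2) by auto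
    thus ?thesis using sr by (auto simp: sorted_wrt_append)
  qed
  ultimately have "y = Suc d" using dd(3) by simp
  thus ?thesis using dd(4) Q R0[of rs y] by (intro exI[of _ 0] exI[of _ 1]) simp
qed

lemma R_inv2: assumes "rows_sorted P" "distinct (concat P)" "x \<notin> set (concat P)"
  "x \<noteq> d" "x \<noteq> Suc d" "a < b" "in_row P a d" "in_row P b (Suc d)"
  shows "\<exists>a b. a < b \<and> in_row (row_insert P x) a d \<and> in_row (row_insert P x) b (Suc d)"
  using assms
proof (induction P arbitrary: x a b)
  case Nil
  then show ?case by simp
next
  case (Cons r rs)
  have srs: "rows_sorted rs" and dr: "distinct (concat rs)" using Cons.prems(1,2) by (auto simp: rows_sorted_def)
  show ?case
  proof (cases "\<forall>z\<in>set r. z < x")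
    case True
    then show ?thesis using ri_dec_e[OF True] Cons.prems(6) in_row_app[OF Cons.prems(7)] in_row_app[OF Cons.prems(8)]
      by metis
  next
    case False
    then obtain p y t where dd: "r = p @ y # t" "\<forall>a\<in>set p. a < x" "\<not> y < x"
      "row_insert (r # rs) x = (p @ x # t) # row_insert rs y" by (rule ri_dec)
    have yn: "y \<notin> set (concat rs)" using Cons.prems(2) dd(1) by auto
    obtain b0 where b0: "b = Suc b0" using Cons.prems(6) by (cases b) auto
    have inb: "in_row rs b0 (Suc d)" using Cons.prems(8) b0 by simp
    show ?thesis
    proof (cases a)
      case 0
      hence dr0: "d \<in> set r" using Cons.prems(7) by simp
      show ?thesis
      proof (cases "y = d")
        case True
        have "d \<notin> set (concat rs)" using yn True by simp
        then obtain a' b' where "a' < b'" "in_row (row_insert rs d) a' d" "in_row (row_insert rs d) b' (Suc d)"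
          using R_ins_d[OF srs dr _ inb] by blast
        then show ?thesis using dd(4) True by (intro exI[of _ "Suc a'"] exI[of _ "Suc b'"]) simp
      next
        case False
        have "in_row (row_insert (r # rs) x) 0 d" using dd dr0 False by simp
        moreover obtain k' where "k' \<ge> b0" "in_row (row_insert rs y) k' (Suc d)"
          using R_mono[OF dr yn inb] by blast
        ultimately show ?thesis using dd(4) by (intro exI[of _ 0] exI[of _ "Suc k'"]) simp
      qed
    next
      case (Suc a0)
      have ina: "in_row rs a0 d" using Cons.prems(7) Suc by simp
      have "y \<noteq> d" "y \<noteq> Suc d" using yn ina inb by (auto simp: in_row_def)
      then obtain a' b' where "a' < b'" "in_row (row_insert rs y) a' d" "in_row (row_insert rs y) b' (Suc d)"
        using Cons.IH[OF srs dr yn _ _ _ ina inb] Cons.prems(6) Suc b0 by auto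
      then show ?thesis using dd(4) by (intro exI[of _ "Suc a'"] exI[of _ "Suc b'"]) simp
    qed
  qed
qed

lemma R_inv1: assumes "rows_sorted P" "distinct (concat P)" "x \<notin> set (concat P)"
  "x \<noteq> d" "x \<noteq> Suc d" "b \<le> a" "in_row P a d" "in_row P b (Suc d)"
  shows "\<exists>a b. b \<le> a \<and> in_row (row_insert P x) a d \<and> in_row (row_insert P x) b (Suc d)"
  using assms
proof (induction P arbitrary: x a b)
  case Nil
  then show ?case by simp
next
  case (Cons r rs)
  have srs: "rows_sorted rs" and dr: "distinct (concat rs)" using Cons.prems(1,2) by (auto simp: rows_sorted_def)
  show ?case
  proof (cases "\<forall>z\<in>set r. z < x")
    case True
    then show ?thesis using ri_dec_e[OF True] Cons.prems(6) in_row_app[OF Cons.prems(7)] in_row_app[OF Cons.prems(8)]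
      by metis
  next
    case False
    then obtain p y t where dd: "r = p @ y # t" "\<forall>a\<in>set p. a < x" "\<not> y < x"
      "row_insert (r # rs) x = (p @ x # t) # row_insert rs y" by (rule ri_dec)
    have yn: "y \<notin> set (concat rs)" using Cons.prems(2) dd(1) by auto
    show ?thesis
    proof (cases b)
      case 0
      hence br: "Suc d \<in> set r" using Cons.prems(8) by simp
      show ?thesis
      proof (cases "y = Suc d")
        case True
        have "a \<noteq> 0"
        proof
          assume "a = 0"
          hence "d \<in> set r" using Cons.prems(7) by simp
          have sr: "sorted_wrt (<) (p @ y # t)" using Cons.prems(1) dd(1) by (simp add: rows_sorted_def)
          have "d \<notin> set (y # t)" using sr True by (auto simp: sorted_wrt_append)
          hence "d \<in> set p" using \<open>d \<in> set r\<close> dd(1) by auto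
          hence "d < x" using dd(2) by auto
          thus False using dd(3) True Cons.prems(4,5) by simp
        qed
        then obtain a0 where a0: "a = Suc a0" by (cases a) auto
        have "in_row rs a0 d" using Cons.prems(7) a0 by simp
        then obtain k' where "k' \<ge> a0" "in_row (row_insert rs y) k' d"
          using R_mono[OF dr yn] by blast
        then show ?thesis using dd(4) R0[of rs y] True by (intro exI[of _ "Suc k'"] exI[of _ 1]) simp
      next
        case False
        have "in_row (row_insert (r # rs) x) 0 (Suc d)" using dd br False by simp
        moreover obtain k' where "in_row (row_insert (r # rs) x) k' d"
          using R_mono[OF Cons.prems(2,3,7)] by blast
        ultimately show ?thesis by blast
      qed
    next
      case (Suc b0)
      then obtain a0 where a0: "a = Suc a0" using Cons.prems(6) by (cases a) auto
      have ina: "in_row rs a0 d" using Cons.prems(7) a0 by simp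
      have inb: "in_row rs b0 (Suc d)" using Cons.prems(8) Suc by simp
      have "y \<noteq> d" "y \<noteq> Suc d" using yn ina inb by (auto simp: in_row_def)
      then obtain a' b' where "b' \<le> a'" "in_row (row_insert rs y) a' d" "in_row (row_insert rs y) b' (Suc d)"
        using Cons.IH[OF srs dr yn _ _ _ ina inb] Cons.prems(6) Suc a0 by auto
      then show ?thesis using dd(4) by (intro exI[of _ "Suc a'"] exI[of _ "Suc b'"]) simp
    qed
  qed
qed



lemma IT_snoc: "insertion_tableau (v @ [x]) = row_insert (insertion_tableau v) x"
  by (simp add: insertion_tableau_def)

lemma IT_inv: "distinct w \<Longrightarrow> rows_sorted (insertion_tableau w) \<and> distinct (concat (insertion_tableau w))
   \<and> set (concat (insertion_tableau w)) = set w"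
proof (induction w rule: rev_induct)
  case Nil
  then show ?case by (simp add: insertion_tableau_def rows_sorted_def)
next
  case (snoc x v)
  then show ?case using R_sorted R_set[of "insertion_tableau v" x] by (simp add: IT_snoc)
qed

definition inv2 where "inv2 P d \<longleftrightarrow> (\<exists>a b. a < b \<and> in_row P a d \<and> in_row P b (Suc d))"
definition inv1 where "inv1 P d \<longleftrightarrow> (\<exists>a b. b \<le> a \<and> in_row P a d \<and> in_row P b (Suc d))"

lemma IT_before: "distinct w \<Longrightarrow> d \<in> set w \<Longrightarrow> Suc d \<in> set w \<Longrightarrow>
  (before (Suc d) d w \<longrightarrow> inv2 (insertion_tableau w) d) \<and> (\<not> before (Suc d) d w \<longrightarrow> inv1 (insertion_tableau w) d)"
proof (induction w rule: rev_induct)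
  case Nil
  then show ?case by simp
next
  case (snoc x v)
  let ?P = "insertion_tableau v"
  have dv: "distinct v" "x \<notin> set v" using snoc.prems(1) by auto
  have I: "rows_sorted ?P" "distinct (concat ?P)" "set (concat ?P) = set v" using IT_inv[OF dv(1)] by auto
  have xn: "x \<notin> set (concat ?P)" using I(3) dv(2) by simp
  show ?case
  proof (cases "x = d")
    case True
    hence "Suc d \<in> set v" using snoc.prems by auto
    hence "Suc d \<in> set (concat ?P)" using I(3) by simp
    then obtain c where "in_row ?P c (Suc d)" using in_row_ex by blast
    hence "inv2 (row_insert ?P d) d" using R_ins_d[OF I(1,2)] xn True by (simp add: inv2_def)
    moreover have "before (Suc d) d (v @ [x])" using True \<open>Suc d \<in> set v\<close> by (simp add: before_snoc)
    ultimately show ?thesis by (simp add: IT_snoc True)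
  next
    case False
    note xd = False
    show ?thesis
    proof (cases "x = Suc d")
      case True
      hence "d \<in> set v" using snoc.prems by auto
      hence "d \<in> set (concat ?P)" using I(3) by simp
      then obtain c where c: "in_row ?P c d" using in_row_ex by blast
      then obtain k' where "in_row (row_insert ?P x) k' d" using R_mono[OF I(2) xn c] by blast
      hence "inv1 (row_insert ?P x) d" using R0[of ?P x] True unfolding inv1_def by blast
      moreover have "\<not> before (Suc d) d (v @ [x])" using True dv(2) by (auto simp: before_snoc dest: before_set)
      ultimately show ?thesis by (simp add: IT_snoc)
    next
      case False
      have ins: "d \<in> set v" "Suc d \<in> set v" using snoc.prems xd False by auto
      have bb: "before (Suc d) d (v @ [x]) = before (Suc d) d v" using xd by (simp add: before_snoc)
      have IH: "(before (Suc d) d v \<longrightarrow> inv2 ?P d) \<and> (\<not> before (Suc d) d v \<longrightarrow> inv1 ?P d)"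
        using snoc.IH[OF dv(1) ins] .
      show ?thesis unfolding bb IT_snoc using IH R_inv1[OF I(1,2) xn xd False] R_inv2[OF I(1,2) xn xd False]
        unfolding inv1_def inv2_def by blast
    qed
  qed
qed



lemma distinct_concat_rev: "distinct (concat (rev T)) = distinct (concat T)"
  by (induction T) (auto simp: distinct_append)

lemma row_unique: "distinct (concat (T :: nat list list)) \<Longrightarrow> r1 < length T \<Longrightarrow> r2 < length T \<Longrightarrow>
   x \<in> set (T ! r1) \<Longrightarrow> x \<in> set (T ! r2) \<Longrightarrow> r1 = r2"
proof (rule ccontr)
  assume h: "distinct (concat T)" "r1 < length T" "r2 < length T" "x \<in> set (T ! r1)" "x \<in> set (T ! r2)" "r1 \<noteq> r2"
  have "before x x (concat T)"
  proof (cases "r1 < r2")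
    case True
    show ?thesis by (rule before_concat_diff[OF True h(3,4,5)])
  next
    case False
    hence "r2 < r1" using h(6) by simp
    show ?thesis by (rule before_concat_diff[OF \<open>r2 < r1\<close> h(2,5,4)])
  qed
  thus False using before_antisym[OF h(1)] by blast
qed

lemma row_of_eq: "distinct (concat T) \<Longrightarrow> r < length T \<Longrightarrow> x \<in> set (T ! r) \<Longrightarrow> row_of T x = r"
  unfolding row_of_def by (rule the_equality) (blast, metis row_unique)

lemma T_before:
  assumes "\<forall>r < length T. sorted_wrt (<) (T ! r)" "distinct (concat T)"
    "rx < length T" "x \<in> set (T ! rx)" "ry < length T" "y \<in> set (T ! ry)" "x < y"
  shows "before y x (row_word T) \<longleftrightarrow> rx < ry"
proof -
  let ?n = "length T"
  have dw: "distinct (row_word T)" using assms(2) distinct_concat_rev by (simp add: row_word_def)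
  have rv: "\<And>r. r < ?n \<Longrightarrow> rev T ! (?n - Suc r) = T ! r" by (simp add: rev_nth)
  show ?thesis
  proof (cases rx ry rule: linorder_cases)
    case less
    have "before y x (concat (rev T))"
      by (rule before_concat_diff[of "?n - Suc ry" "?n - Suc rx"]) (use less assms rv in auto)
    then show ?thesis using less by (simp add: row_word_def)
  next
    case equal
    have "before x y (T ! rx)" using before_sorted assms equal by blast
    hence "before x y (concat (rev T))" using before_concat_same[of "?n - Suc rx" "rev T"] rv assms(3) by simp
    hence "\<not> before y x (row_word T)" using before_antisym dw by (simp add: row_word_def)
    then show ?thesis using equal by simp
  next
    case greater
    have "before x y (concat (rev T))"
      by (rule before_concat_diff[of "?n - Suc rx" "?n - Suc ry"]) (use greater assms rv in auto)
    hence "\<not> before y x (row_word T)" using before_antisym dw by (simp add: row_word_def)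
    then show ?thesis using greater by simp
  qed
qed

lemma des_block:
  assumes fin: "\<forall>d\<in>descents T. d < N" and tN: "tab_size T = N"
    and c: "i + m \<in> descents T" and i1: "1 \<le> i" and iN: "i + 2 * m \<le> N"
    and nd1: "\<forall>d\<in>descents T. \<not> (i \<le> d \<and> d < i + m)"
    and nd2: "\<forall>d\<in>descents T. \<not> (i + m < d \<and> d < i + 2 * m)"
  shows "\<exists>j. 1 \<le> j \<and> j < length (Des T)
           \<and> {i..i + m - 1} \<union> {i + m} \<subseteq> comp_block (Des T) j
           \<and> {i + m + 1..i + 2 * m} \<subseteq> comp_block (Des T) (j + 1)"
proof -
  define D where "D = descents T"
  have finD: "finite D" using fin unfolding D_def by (meson finite_subset finite_lessThan subsetI lessThan_iff)
  define ds where "ds = sorted_list_of_set D"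
  define n where "n = length ds"
  define bs where "bs = 0 # ds @ [N]"
  have sds: "sorted_wrt (<) ds" unfolding ds_def by (simp add: strict_sorted_list_of_set)
  have setds: "set ds = D" unfolding ds_def using finD by simp
  have DesT: "Des T = map (\<lambda>k. bs ! (k + 1) - bs ! k) [0..<n + 1]"
    unfolding Des_def Let_def bs_def n_def ds_def D_def tN by simp
  have sbs: "sorted bs"
  proof -
    have "sorted ds" unfolding ds_def by simp
    moreover have "\<forall>x\<in>set ds. x \<le> N" using setds fin D_def by auto
    ultimately show ?thesis unfolding bs_def by (simp add: sorted_append)
  qed
  have lbs: "length bs = n + 2" unfolding bs_def n_def by simp
  have tele: "j \<le> n + 1 \<Longrightarrow> sum_list (take j (Des T)) = bs ! j" for j
  proof (induction j)
    case 0
    then show ?case by (simp add: bs_def)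
  next
    case (Suc j)
    have "take (Suc j) (Des T) = take j (Des T) @ [Des T ! j]"
      by (rule take_Suc_conv_app_nth) (use Suc.prems DesT in simp)
    moreover have "Des T ! j = bs ! (j + 1) - bs ! j" using Suc.prems DesT
      by (simp del: upt_Suc)
    moreover have "bs ! j \<le> bs ! (j + 1)" using sbs lbs Suc.prems by (simp add: sorted_iff_nth_mono)
    ultimately show ?case using Suc by simp
  qed
  obtain k where k: "k < n" "ds ! k = i + m" using c setds D_def n_def by (metis in_set_conv_nth)
  have b1: "bs ! Suc k = i + m" using k unfolding bs_def n_def by (simp add: nth_append)
  have b0: "bs ! k < i"
  proof (cases k)
    case 0
    then show ?thesis using i1 by (simp add: bs_def)
  next
    case (Suc k0)
    have "ds ! k0 < ds ! k" using sds k(1) Suc n_def unfolding sorted_wrt_iff_nth_less by (metis lessI)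
    moreover have "ds ! k0 \<in> D" using setds k Suc n_def by auto
    ultimately have "ds ! k0 < i" using nd1 k D_def by fastforce
    then show ?thesis using Suc k unfolding bs_def n_def by (simp add: nth_append)
  qed
  have b2: "i + 2 * m \<le> bs ! Suc (Suc k)"
  proof (cases "Suc k < n")
    case True
    have "ds ! k < ds ! Suc k" using sds True n_def unfolding sorted_wrt_iff_nth_less by (metis lessI)
    moreover have "ds ! Suc k \<in> D" using setds True n_def by auto
    ultimately have "i + 2 * m \<le> ds ! Suc k" using nd2 k D_def by fastforce
    then show ?thesis using True unfolding bs_def n_def by (simp add: nth_append)
  next
    case False
    hence "Suc k = n" using k by simp
    then show ?thesis using iN unfolding bs_def n_def by (simp add: nth_append)
  qed
  have lD: "length (Des T) = n + 1" using DesT by simp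
  have t0: "sum_list (take k (Des T)) = bs ! k" using k(1) by (intro tele) simp
  have t1: "sum_list (take (Suc k) (Des T)) = bs ! Suc k" using k(1) by (intro tele) simp
  have t2: "sum_list (take (Suc (Suc k)) (Des T)) = bs ! Suc (Suc k)" using k(1) by (intro tele) simp
  have cb1: "comp_block (Des T) (Suc k) = {bs ! k + 1 .. bs ! Suc k}"
    unfolding comp_block_def diff_Suc_1 t0 t1 ..
  have cb2: "comp_block (Des T) (Suc k + 1) = {bs ! Suc k + 1 .. bs ! Suc (Suc k)}"
    unfolding comp_block_def Suc_eq_plus1[symmetric] diff_Suc_1 t1 t2 ..
  have s1: "{i..i + m - 1} \<union> {i + m} \<subseteq> {bs ! k + 1 .. bs ! Suc k}"
    using b0 b1 by (intro subsetI) (simp, linarith)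
  have s2: "{i + m + 1..i + 2 * m} \<subseteq> {bs ! Suc k + 1 .. bs ! Suc (Suc k)}"
    using b1 b2 by (intro subsetI) simp
  show ?thesis
  proof (intro exI[of _ "Suc k"] conjI)
    show "1 \<le> Suc k" by simp
    show "Suc k < length (Des T)" using lD k(1) by simp
    show "{i..i + m - 1} \<union> {i + m} \<subseteq> comp_block (Des T) (Suc k)" unfolding cb1 by (rule s1)
    show "{i + m + 1..i + 2 * m} \<subseteq> comp_block (Des T) (Suc k + 1)" unfolding cb2 by (rule s2)
  qed
qed



theorem lemma4p20:
  fixes lam :: "nat list" and T :: "nat list list" and i m :: nat
  assumes "T \<in> SYT lam"
    and "dyck_pattern_interval (row_word T) i m"
  shows "\<exists>j. 1 \<le> j \<and> j < length (Des T)
           \<and> {i..i + m - 1} \<union> {i + m} \<subseteq> comp_block (Des T) j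
           \<and> {i + m + 1..i + 2 * m} \<subseteq> comp_block (Des T) (j + 1)"
proof -
  have ml: "map length T = lam" and dT: "distinct (concat T)"
    and sc0: "set (concat T) = {1..sum_list lam}"
    and srt: "\<forall>r < length T. sorted_wrt (<) (T ! r)"
    using assms(1) unfolding SYT_def by auto
  define N where "N = length (concat T)"
  have "sum_list lam = N" unfolding N_def ml[symmetric] by (simp add: length_concat)
  hence sc: "set (concat T) = {1..N}" using sc0 by simp
  have tN: "tab_size T = N" by (simp add: tab_size_def N_def)
  have lw: "length (row_word T) = N" unfolding row_word_def N_def by (simp add: length_concat rev_map[symmetric])
  define P0 where "P0 = [[i..<i + m + 1], [i + m + 1..<i + 2 * m + 1]]"
  define w where "w = filter (\<lambda>a. a \<in> {i..i + 2 * m}) (row_word T)"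
  have m1: "1 \<le> m" and i1: "1 \<le> i" and iN: "i + 2 * m \<le> N" and IT: "insertion_tableau w = P0"
    using assms(2) lw unfolding dyck_pattern_interval_def w_def P0_def by auto
  have dwT: "distinct (row_word T)" using dT distinct_concat_rev by (simp add: row_word_def)
  have dw: "distinct w" unfolding w_def using dwT by simp
  have srw: "set (row_word T) = {1..N}" using sc by (simp add: row_word_def)
  have inP0: "in_row P0 k e \<longleftrightarrow> (k = 0 \<and> i \<le> e \<and> e \<le> i + m) \<or> (k = 1 \<and> i + m + 1 \<le> e \<and> e \<le> i + 2 * m)" for k e
    by (cases k) (auto simp: in_row_def P0_def less_Suc_eq)
  have key: "d \<in> descents T \<longleftrightarrow> d = i + m" if dr: "i \<le> d" "d < i + 2 * m" for d
  proof -
    have inw: "d \<in> set w" "Suc d \<in> set w" unfolding w_def using srw dr i1 iN by auto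
    have B: "before (Suc d) d w \<longleftrightarrow> d = i + m"
    proof
      assume "before (Suc d) d w"
      hence "inv2 P0 d" using IT_before[OF dw inw] IT by simp
      then show "d = i + m" unfolding inv2_def inP0 by auto
    next
      assume e: "d = i + m"
      show "before (Suc d) d w"
      proof (rule ccontr)
        assume "\<not> before (Suc d) d w"
        hence "inv1 P0 d" using IT_before[OF dw inw] IT by simp
        then show False unfolding inv1_def inP0 using e by auto
      qed
    qed
    have B2: "before (Suc d) d w \<longleftrightarrow> before (Suc d) d (row_word T)"
      unfolding w_def using dr by (intro before_filter) auto
    have "d \<in> set (concat T)" "Suc d \<in> set (concat T)" using sc dr i1 iN by auto
    then obtain rx ry where rx: "rx < length T" "d \<in> set (T ! rx)" and ry: "ry < length T" "Suc d \<in> set (T ! ry)"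
      using in_row_ex unfolding in_row_def by meson
    have B3: "before (Suc d) d (row_word T) \<longleftrightarrow> rx < ry"
      by (rule T_before[OF srt dT rx ry]) simp
    have r1: "row_of T d = rx" by (rule row_of_eq[OF dT rx])
    have r2: "row_of T (Suc d) = ry" using row_of_eq[OF dT ry] by simp
    have "d \<in> descents T \<longleftrightarrow> rx < ry"
      unfolding descents_def tN using dr i1 iN r1 r2 by auto
    thus ?thesis using B B2 B3 by simp
  qed
  show ?thesis
  proof (rule des_block[OF _ tN _ i1 iN])
    show "\<forall>d\<in>descents T. d < N" unfolding descents_def tN by auto
    show "i + m \<in> descents T" using key m1 by simp
    show "\<forall>d\<in>descents T. \<not> (i \<le> d \<and> d < i + m)" using key m1 by fastforce
    show "\<forall>d\<in>descents T. \<not> (i + m < d \<and> d < i + 2 * m)" using key by fastforce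
  qed
qed

end
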